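(* Under the Rician noise model below, let $\widehat D_{NL}$ be the nonlinear least squares estimator $\widehat D_{NL}=\arg\min_{D\in\mathbb R^6}\sum_{b\in\mathcal B}(S_b-S_0\exp(-x_b^TD))^2$. Then as $\sigma\to0$, $$\widehat D_{NL}=D^0+\sigma D_{1,NL}+\sigma^2D_{2,NL}+O_P(\sigma^3),$$ where, writing $M=\sum_{b\in\mathcal B}\overline S_b^2x_bx_b^T$, $$D_{1,NL}=-M^{-1}\sum_{b\in\mathcal B}\overline S_b(u_b^T\varepsilon_b)x_b,$$ $$D_{2,NL}=M^{-1}\Big[\sum_{b\in\mathcal B}\overline S_b^2(x_b^TD_{1,NL})^2x_b+\frac12\sum_{b\in\mathcal B}(\overline S_bx_b^TD_{1,NL}+u_b^T\varepsilon_b)^2x_b-\frac12\sum_{b\in\mathcal B}\|\varepsilon_b\|^2x_b\Big].$$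
   Context: Rician noise model: $S_0>0$ is a known constant; $\mathcal B$ is a finite set of unit vectors $b=(b_1,b_2,b_3)^T\in\mathbb R^3$; a symmetric $3\times3$ matrix $D$ is identified with $(D_{11},D_{22},D_{33},D_{12},D_{13},D_{23})^T\in\mathbb R^6$, and $x_b=(b_1^2,b_2^2,b_3^2,2b_1b_2,2b_1b_3,2b_2b_3)^T$, so $b^TDb=x_b^TD$. It is assumed that $\sum_{b\in\mathcal B}x_bx_b^T$ is invertible. $D^0$ is the true tensor and $\overline S_b=S_0\exp(-x_b^TD^0)$. For each $b$, $u_b\in\mathbb R^2$ is a unit vector. The $\varepsilon_b$, $b\in\mathcal B$, are independent $N(0,I_2)$ random vectors, $\sigma>0$, and $S_b=\|\overline S_bu_b+\sigma\varepsilon_b\|$. Asymptotics are as $\sigma\to0$ with $S_0,D^0,\mathcal B,(u_b)$ fixed; $O_P(\sigma^3)$ denotes a random vector $R_\sigma$ with $R_\sigma/\sigma^3$ bounded in probability. *)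

theory Defs
  imports "HOL-Probability.Probability"
begin

text \<open>Identification of a symmetric 3x3 matrix D with
  (D11,D22,D33,D12,D13,D23) in R^6, and the design vector x_b.\<close>
definition xvec :: "real^3 \<Rightarrow> real^6" where
  "xvec b = vector [(b$1)^2, (b$2)^2, (b$3)^2, 2*b$1*b$2, 2*b$1*b$3, 2*b$2*b$3]"

definition outer_prod :: "real^6 \<Rightarrow> real^6 \<Rightarrow> real^6^6" where
  "outer_prod x y = (\<chi> i j. x$i * y$j)"

definition Sbar :: "real \<Rightarrow> real^6 \<Rightarrow> real^3 \<Rightarrow> real" where
  "Sbar S0 D0 b = S0 * exp (- (xvec b \<bullet> D0))"

definition Sobs :: "real \<Rightarrow> real^6 \<Rightarrow> (real^3 \<Rightarrow> real^2) \<Rightarrow> real \<Rightarrow> (real^3 \<Rightarrow> real^2) \<Rightarrow> real^3 \<Rightarrow> real" where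
  "Sobs S0 D0 u \<sigma> e b = norm (Sbar S0 D0 b *\<^sub>R u b + \<sigma> *\<^sub>R e b)"

definition NLobj :: "(real^3) set \<Rightarrow> real \<Rightarrow> real^6 \<Rightarrow> (real^3 \<Rightarrow> real^2) \<Rightarrow> real \<Rightarrow> (real^3 \<Rightarrow> real^2) \<Rightarrow> real^6 \<Rightarrow> real" where
  "NLobj B S0 D0 u \<sigma> e D = (\<Sum>b\<in>B. (Sobs S0 D0 u \<sigma> e b - S0 * exp (- (xvec b \<bullet> D)))^2)"

definition Mmat :: "(real^3) set \<Rightarrow> real \<Rightarrow> real^6 \<Rightarrow> real^6^6" where
  "Mmat B S0 D0 = (\<Sum>b\<in>B. (Sbar S0 D0 b)^2 *\<^sub>R outer_prod (xvec b) (xvec b))"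

definition D1NL :: "(real^3) set \<Rightarrow> real \<Rightarrow> real^6 \<Rightarrow> (real^3 \<Rightarrow> real^2) \<Rightarrow> (real^3 \<Rightarrow> real^2) \<Rightarrow> real^6" where
  "D1NL B S0 D0 u e =
     - (matrix_inv (Mmat B S0 D0) *v (\<Sum>b\<in>B. (Sbar S0 D0 b * (u b \<bullet> e b)) *\<^sub>R xvec b))"

definition D2NL :: "(real^3) set \<Rightarrow> real \<Rightarrow> real^6 \<Rightarrow> (real^3 \<Rightarrow> real^2) \<Rightarrow> (real^3 \<Rightarrow> real^2) \<Rightarrow> real^6" where
  "D2NL B S0 D0 u e =
     (let D1 = D1NL B S0 D0 u e in
      matrix_inv (Mmat B S0 D0) *v
        ((\<Sum>b\<in>B. ((Sbar S0 D0 b)^2 * (xvec b \<bullet> D1)^2) *\<^sub>R xvec b)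
         + (1/2) *\<^sub>R (\<Sum>b\<in>B. (Sbar S0 D0 b * (xvec b \<bullet> D1) + u b \<bullet> e b)^2 *\<^sub>R xvec b)
         - (1/2) *\<^sub>R (\<Sum>b\<in>B. (norm (e b))^2 *\<^sub>R xvec b)))"

text \<open>X_sigma is bounded in probability as sigma -> 0+ (formulated with inner
  probability, so no measurability of X is required): for every e > 0 there is K
  such that for all sufficiently small sigma > 0 there is an event of probability
  at least 1 - e on which norm (X sigma) <= K.\<close>
definition bounded_in_prob_at0 :: "'a measure \<Rightarrow> (real \<Rightarrow> 'a \<Rightarrow> 'b::real_normed_vector) \<Rightarrow> bool" where
  "bounded_in_prob_at0 M X \<longleftrightarrow>
     (\<forall>e>0. \<exists>K. \<forall>\<^sub>F \<sigma> in at_right 0.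
        \<exists>A\<in>sets M. measure M A \<ge> 1 - e \<and> (\<forall>\<omega>\<in>A. norm (X \<sigma> \<omega>) \<le> K))"

end

theory Submission
  imports Defs
begin


lemma ev_small: "(c::real) > 0 \<Longrightarrow> \<forall>\<^sub>F \<sigma> in at_right 0. 0 < \<sigma> \<and> \<sigma> < c"
  unfolding eventually_at_right[of 0] by (intro exI[of _ c]) auto

definition bo :: "'w set \<Rightarrow> (real \<Rightarrow> 'w \<Rightarrow> 'v::real_normed_vector) \<Rightarrow> nat \<Rightarrow> bool" where
  "bo W f k \<longleftrightarrow> (\<exists>C. \<forall>\<^sub>F \<sigma> in at_right 0. \<forall>\<omega>\<in>W. norm (f \<sigma> \<omega>) \<le> C * \<sigma>^k)"

lemma boI: "(\<forall>\<^sub>F \<sigma> in at_right 0. \<forall>\<omega>\<in>W. norm (f \<sigma> \<omega>) \<le> C * \<sigma>^k) \<Longrightarrow> bo W f k"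
  unfolding bo_def by blast

lemma bo_cong:
  assumes "bo W f k" "\<forall>\<^sub>F \<sigma> in at_right 0. \<forall>\<omega>\<in>W. f \<sigma> \<omega> = g \<sigma> \<omega>"
  shows "bo W g k"
proof -
  obtain C where "\<forall>\<^sub>F \<sigma> in at_right 0. \<forall>\<omega>\<in>W. norm (f \<sigma> \<omega>) \<le> C * \<sigma>^k" using assms(1) bo_def by blast
  with assms(2) have "\<forall>\<^sub>F \<sigma> in at_right 0. \<forall>\<omega>\<in>W. norm (g \<sigma> \<omega>) \<le> C * \<sigma>^k"
    by eventually_elim auto
  thus ?thesis by (rule boI)
qed

lemma bo_add:
  assumes "bo W f k" "bo W g k"
  shows "bo W (\<lambda>\<sigma> \<omega>. f \<sigma> \<omega> + g \<sigma> \<omega>) k"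
proof -
  obtain C where C: "\<forall>\<^sub>F \<sigma> in at_right 0. \<forall>\<omega>\<in>W. norm (f \<sigma> \<omega>) \<le> C * \<sigma>^k" using assms(1) bo_def by blast
  obtain D where D: "\<forall>\<^sub>F \<sigma> in at_right 0. \<forall>\<omega>\<in>W. norm (g \<sigma> \<omega>) \<le> D * \<sigma>^k" using assms(2) bo_def by blast
  from C D have "\<forall>\<^sub>F \<sigma> in at_right 0. \<forall>\<omega>\<in>W. norm (f \<sigma> \<omega> + g \<sigma> \<omega>) \<le> (C + D) * \<sigma>^k"
  proof eventually_elim
    case (elim \<sigma>)
    show ?case
    proof
      fix \<omega> assume "\<omega> \<in> W"
      have "norm (f \<sigma> \<omega> + g \<sigma> \<omega>) \<le> norm (f \<sigma> \<omega>) + norm (g \<sigma> \<omega>)" by (rule norm_triangle_ineq)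
      also have "\<dots> \<le> (C + D) * \<sigma>^k" using elim \<open>\<omega> \<in> W\<close> by (auto simp: distrib_right intro: add_mono)
      finally show "norm (f \<sigma> \<omega> + g \<sigma> \<omega>) \<le> (C + D) * \<sigma>^k" .
    qed
  qed
  thus ?thesis by (rule boI)
qed

lemma bo_mult:
  fixes f :: "real \<Rightarrow> 'w \<Rightarrow> real" and g :: "real \<Rightarrow> 'w \<Rightarrow> 'v::real_normed_vector"
  assumes "bo W f i" "bo W g j"
  shows "bo W (\<lambda>\<sigma> \<omega>. f \<sigma> \<omega> *\<^sub>R g \<sigma> \<omega>) (i + j)"
proof -
  obtain C where C: "\<forall>\<^sub>F \<sigma> in at_right 0. \<forall>\<omega>\<in>W. norm (f \<sigma> \<omega>) \<le> C * \<sigma>^i" using assms(1) bo_def by blast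
  obtain D where D: "\<forall>\<^sub>F \<sigma> in at_right 0. \<forall>\<omega>\<in>W. norm (g \<sigma> \<omega>) \<le> D * \<sigma>^j" using assms(2) bo_def by blast
  from C D have "\<forall>\<^sub>F \<sigma> in at_right 0. \<forall>\<omega>\<in>W. norm (f \<sigma> \<omega> *\<^sub>R g \<sigma> \<omega>) \<le> (C * D) * \<sigma>^(i+j)"
  proof eventually_elim
    case (elim \<sigma>)
    show ?case
    proof
      fix \<omega> assume w: "\<omega> \<in> W"
      have "norm (f \<sigma> \<omega> *\<^sub>R g \<sigma> \<omega>) = norm (f \<sigma> \<omega>) * norm (g \<sigma> \<omega>)" by simp
      also have "\<dots> \<le> (C * \<sigma>^i) * (D * \<sigma>^j)"
        apply (rule mult_mono) using elim w norm_ge_zero[of "g \<sigma> \<omega>"] by (auto intro: order_trans)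
      also have "\<dots> = (C * D) * \<sigma>^(i+j)" by (simp add: power_add algebra_simps)
      finally show "norm (f \<sigma> \<omega> *\<^sub>R g \<sigma> \<omega>) \<le> (C * D) * \<sigma>^(i+j)" .
    qed
  qed
  thus ?thesis by (rule boI)
qed

lemma bo_mono:
  assumes "bo W f k" "j \<le> k"
  shows "bo W f j"
proof -
  obtain C where C: "\<forall>\<^sub>F \<sigma> in at_right 0. \<forall>\<omega>\<in>W. norm (f \<sigma> \<omega>) \<le> C * \<sigma>^k" using assms(1) bo_def by blast
  from C ev_small[OF zero_less_one] have "\<forall>\<^sub>F \<sigma> in at_right 0. \<forall>\<omega>\<in>W. norm (f \<sigma> \<omega>) \<le> \<bar>C\<bar> * \<sigma>^j"
  proof eventually_elim
    case (elim \<sigma>)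
    show ?case
    proof
      fix \<omega> assume w: "\<omega> \<in> W"
      have "norm (f \<sigma> \<omega>) \<le> C * \<sigma>^k" using elim w by auto
      also have "\<dots> \<le> \<bar>C\<bar> * \<sigma>^k" using elim by (intro mult_right_mono) auto
      also have "\<dots> \<le> \<bar>C\<bar> * \<sigma>^j" using elim assms(2) by (intro mult_left_mono power_decreasing) auto
      finally show "norm (f \<sigma> \<omega>) \<le> \<bar>C\<bar> * \<sigma>^j" .
    qed
  qed
  thus ?thesis by (rule boI)
qed

lemma bo_linear:
  assumes "bounded_linear L" "bo W f k"
  shows "bo W (\<lambda>\<sigma> \<omega>. L (f \<sigma> \<omega>)) k"
proof -
  obtain C where C: "\<forall>\<^sub>F \<sigma> in at_right 0. \<forall>\<omega>\<in>W. norm (f \<sigma> \<omega>) \<le> C * \<sigma>^k" using assms(2) bo_def by blast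
  obtain K where K: "K > 0" "\<And>x. norm (L x) \<le> norm x * K" using bounded_linear.pos_bounded[OF assms(1)] by blast
  from C have "\<forall>\<^sub>F \<sigma> in at_right 0. \<forall>\<omega>\<in>W. norm (L (f \<sigma> \<omega>)) \<le> (K * C) * \<sigma>^k"
  proof eventually_elim
    case (elim \<sigma>)
    show ?case
    proof
      fix \<omega> assume w: "\<omega> \<in> W"
      have "norm (L (f \<sigma> \<omega>)) \<le> norm (f \<sigma> \<omega>) * K" by (rule K)
      also have "\<dots> \<le> (C * \<sigma>^k) * K" using elim w K by (intro mult_right_mono) auto
      finally show "norm (L (f \<sigma> \<omega>)) \<le> (K * C) * \<sigma>^k" by (simp add: algebra_simps)
    qed
  qed
  thus ?thesis by (rule boI)
qed

lemma bo_scale: "bo W f k \<Longrightarrow> bo W (\<lambda>\<sigma> \<omega>. c *\<^sub>R f \<sigma> \<omega>) k"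
  using bo_linear[of "\<lambda>x. c *\<^sub>R x" W f k] bounded_linear_scaleR_right by blast

lemma bo_neg: "bo W f k \<Longrightarrow> bo W (\<lambda>\<sigma> \<omega>. - f \<sigma> \<omega>) k"
  using bo_scale[of W f k "-1"] by simp

lemma bo_diff: "bo W f k \<Longrightarrow> bo W g k \<Longrightarrow> bo W (\<lambda>\<sigma> \<omega>. f \<sigma> \<omega> - g \<sigma> \<omega>) k"
  using bo_add[OF _ bo_neg[of W g k], of f] by simp

lemma bo_zero: "bo W (\<lambda>\<sigma> \<omega>. 0) k"
  by (rule boI[of _ _ 0]) auto

lemma bo_sum:
  assumes "finite B" "\<And>b. b \<in> B \<Longrightarrow> bo W (f b) k"
  shows "bo W (\<lambda>\<sigma> \<omega>. \<Sum>b\<in>B. f b \<sigma> \<omega>) k"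
  using assms
proof (induction B rule: finite_induct)
  case empty
  then show ?case by (simp add: bo_zero)
next
  case (insert x F)
  then show ?case using bo_add[of W "f x" k "\<lambda>\<sigma> \<omega>. \<Sum>b\<in>F. f b \<sigma> \<omega>"] by simp
qed

lemma bo_const: "(\<forall>\<omega>\<in>W. norm (f \<omega>) \<le> K) \<Longrightarrow> bo W (\<lambda>\<sigma> \<omega>. f \<omega>) 0"
  by (rule boI[of _ _ K]) auto

lemma bo_sigma: "bo W (\<lambda>\<sigma> \<omega>. \<sigma>) 1"
  by (rule boI[of _ _ 1]) (use eventually_at_right_less[of 0] in \<open>eventually_elim, auto\<close>)

lemma bo_small:
  assumes "bo W f 1"
  shows "\<forall>\<^sub>F \<sigma> in at_right 0. \<forall>\<omega>\<in>W. norm (f \<sigma> \<omega>) \<le> 1"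
proof -
  obtain C where C: "\<forall>\<^sub>F \<sigma> in at_right 0. \<forall>\<omega>\<in>W. norm (f \<sigma> \<omega>) \<le> C * \<sigma>^1" using assms bo_def by blast
  have "(\<bar>C\<bar> + 1) > 0" by simp
  from C ev_small[OF divide_pos_pos[OF zero_less_one this]] show ?thesis
  proof eventually_elim
    case (elim \<sigma>)
    show ?case
    proof
      fix \<omega> assume w: "\<omega> \<in> W"
      have "norm (f \<sigma> \<omega>) \<le> C * \<sigma>" using elim w by auto
      also have "\<dots> \<le> (\<bar>C\<bar> + 1) * \<sigma>" using elim by (intro mult_right_mono) auto
      also have "\<dots> \<le> 1" using elim by (simp add: field_simps)
      finally show "norm (f \<sigma> \<omega>) \<le> 1" .
    qed
  qed
qed

lemma bo_cube:
  fixes y :: "real \<Rightarrow> 'w \<Rightarrow> 'v::real_normed_vector"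
  assumes "bo W y 1" "\<forall>\<^sub>F \<sigma> in at_right 0. \<forall>\<omega>\<in>W. norm (r \<sigma> \<omega>) \<le> norm (y \<sigma> \<omega>)^3"
  shows "bo W r 3"
proof -
  obtain C where C: "\<forall>\<^sub>F \<sigma> in at_right 0. \<forall>\<omega>\<in>W. norm (y \<sigma> \<omega>) \<le> C * \<sigma>^1" using assms bo_def by blast
  from C assms(2) eventually_at_right_less[of 0] have "\<forall>\<^sub>F \<sigma> in at_right 0. \<forall>\<omega>\<in>W. norm (r \<sigma> \<omega>) \<le> \<bar>C\<bar>^3 * \<sigma>^3"
  proof eventually_elim
    case (elim \<sigma>)
    show ?case
    proof
      fix \<omega> assume w: "\<omega> \<in> W"
      have "norm (r \<sigma> \<omega>) \<le> norm (y \<sigma> \<omega>)^3" using elim w by auto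
      also have "\<dots> \<le> (\<bar>C\<bar> * \<sigma>)^3" using elim w
        by (intro power_mono) (auto intro: order_trans[OF _ mult_right_mono[of C "\<bar>C\<bar>"]])
      finally show "norm (r \<sigma> \<omega>) \<le> \<bar>C\<bar>^3 * \<sigma>^3" by (simp add: power_mult_distrib)
    qed
  qed
  thus ?thesis by (rule boI)
qed



lemma mv_outer: "outer_prod x y *v v = (y \<bullet> v) *\<^sub>R x"
  by (simp add: vec_eq_iff outer_prod_def matrix_vector_mult_def inner_vec_def sum_distrib_left algebra_simps)

lemma mv_scale: "((c::real) *\<^sub>R (A::real^'n^'m)) *v v = c *\<^sub>R (A *v v)"
  by (simp add: vec_eq_iff matrix_vector_mult_def sum_distrib_left algebra_simps)

lemma mv_sum: "finite B \<Longrightarrow> (\<Sum>b\<in>B. (A b :: real^'n^'m)) *v v = (\<Sum>b\<in>B. A b *v v)"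
  by (induction B rule: finite_induct) (auto simp: matrix_vector_mult_add_rdistrib)

lemma matrix_inv_props:
  assumes "invertible (A::real^'n^'n)"
  shows "A ** matrix_inv A = mat 1" "matrix_inv A ** A = mat 1"
  using someI_ex[OF assms[unfolded invertible_def]] unfolding matrix_inv_def by auto

lemma matrix_inv_mv:
  assumes "invertible (A::real^'n^'n)"
  shows "matrix_inv A *v (A *v v) = v" "A *v (matrix_inv A *v v) = v"
  using matrix_inv_props[OF assms] by (auto simp: matrix_vector_mul_assoc)

lemma G_mv: "finite B \<Longrightarrow> (\<Sum>b\<in>B. outer_prod (xvec b) (xvec b)) *v v = (\<Sum>b\<in>B. (xvec b \<bullet> v) *\<^sub>R xvec b)"
  by (simp add: mv_sum mv_outer)

lemma M_mv: "finite B \<Longrightarrow> Mmat B S0 D0 *v v = (\<Sum>b\<in>B. ((Sbar S0 D0 b)^2 * (xvec b \<bullet> v)) *\<^sub>R xvec b)"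
  by (simp add: Mmat_def mv_sum mv_outer mv_scale)

lemma inner_sum_left': "(\<Sum>b\<in>B. f b) \<bullet> (v::'a::real_inner) = (\<Sum>b\<in>B. f b \<bullet> v)"
  by (rule inner_sum_left)

lemma M_invertible:
  assumes "finite B" "S0 > 0" "invertible (\<Sum>b\<in>B. outer_prod (xvec b) (xvec b))"
  shows "invertible (Mmat B S0 D0)"
proof -
  have "\<forall>v. Mmat B S0 D0 *v v = 0 \<longrightarrow> v = 0"
  proof (intro allI impI)
    fix v assume h: "Mmat B S0 D0 *v v = 0"
    have "0 = (Mmat B S0 D0 *v v) \<bullet> v" using h by simp
    also have "\<dots> = (\<Sum>b\<in>B. (Sbar S0 D0 b)^2 * (xvec b \<bullet> v)^2)"
      by (simp add: M_mv[OF assms(1)] inner_sum_left power2_eq_square algebra_simps)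
    finally have s: "(\<Sum>b\<in>B. (Sbar S0 D0 b)^2 * (xvec b \<bullet> v)^2) = 0" by simp
    have pos: "\<And>b. Sbar S0 D0 b > 0" using assms(2) by (simp add: Sbar_def)
    have "\<forall>b\<in>B. (Sbar S0 D0 b)^2 * (xvec b \<bullet> v)^2 = 0"
      using s by (subst (asm) sum_nonneg_eq_0_iff) (auto simp: assms(1))
    hence "\<forall>b\<in>B. xvec b \<bullet> v = 0" using pos by (metis mult_eq_0_iff power_not_zero zero_less_power2 less_irrefl)
    hence "(\<Sum>b\<in>B. outer_prod (xvec b) (xvec b)) *v v = 0" by (simp add: G_mv[OF assms(1)])
    hence "(\<Sum>b\<in>B. outer_prod (xvec b) (xvec b)) *v v = (\<Sum>b\<in>B. outer_prod (xvec b) (xvec b)) *v 0" by simp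
    thus "v = 0" using injD[OF inj_matrix_vector_mult[OF assms(3)]] by blast
  qed
  hence "\<exists>B'. B' ** Mmat B S0 D0 = mat 1" using matrix_left_invertible_ker by blast
  thus ?thesis using invertible_left_inverse by blast
qed



lemma Sobs_sq:
  assumes "norm (u b) = 1"
  shows "(Sobs S0 D0 u \<sigma> e b)^2 = (Sbar S0 D0 b)^2 + 2*\<sigma>*Sbar S0 D0 b*(u b \<bullet> e b) + \<sigma>^2 * (norm (e b))^2"
proof -
  let ?a = "Sbar S0 D0 b *\<^sub>R u b" and ?c = "\<sigma> *\<^sub>R e b"
  have uu: "u b \<bullet> u b = 1" using assms by (simp add: power2_norm_eq_inner[symmetric])
  have ee: "e b \<bullet> e b = (norm (e b))^2" by (simp add: power2_norm_eq_inner)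
  have "(norm (?a + ?c))^2 = (?a + ?c) \<bullet> (?a + ?c)" by (rule power2_norm_eq_inner)
  also have "\<dots> = (Sbar S0 D0 b)^2 * (u b \<bullet> u b) + 2*\<sigma>*Sbar S0 D0 b*(u b \<bullet> e b) + \<sigma>^2 * (e b \<bullet> e b)"
    by (simp add: inner_add_left inner_add_right inner_commute[of "e b" "u b"] algebra_simps power2_eq_square)
  finally show ?thesis unfolding Sobs_def uu ee by simp
qed

lemma Sobs_close:
  assumes "norm (u b) = 1" "S0 > 0"
  shows "\<bar>Sobs S0 D0 u \<sigma> e b - Sbar S0 D0 b\<bar> \<le> \<bar>\<sigma>\<bar> * norm (e b)"
proof -
  have p: "Sbar S0 D0 b > 0" using assms(2) by (simp add: Sbar_def)
  have "norm (Sbar S0 D0 b *\<^sub>R u b) = Sbar S0 D0 b" using p assms(1) by simp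
  hence "\<bar>Sobs S0 D0 u \<sigma> e b - Sbar S0 D0 b\<bar> = \<bar>norm (Sbar S0 D0 b *\<^sub>R u b + \<sigma> *\<^sub>R e b) - norm (Sbar S0 D0 b *\<^sub>R u b)\<bar>"
    by (simp add: Sobs_def)
  also have "\<dots> \<le> norm (\<sigma> *\<^sub>R e b)" using norm_triangle_ineq3[of "Sbar S0 D0 b *\<^sub>R u b + \<sigma> *\<^sub>R e b" "Sbar S0 D0 b *\<^sub>R u b"] by simp
  finally show ?thesis by simp
qed

lemma exp_rem:
  fixes y :: real
  assumes "\<bar>y\<bar> \<le> 1"
  shows "\<bar>exp (-y) - 1 + y - y^2/2\<bar> \<le> \<bar>y\<bar>^3"
proof -
  obtain t where t: "\<bar>t\<bar> \<le> \<bar>-y\<bar>" "exp (-y) = (\<Sum>m<3. ((-y) ^ m) / fact m) + (exp t / fact 3) * (-y) ^ 3"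
    using Maclaurin_exp_le[of "-y" 3] by blast
  have s: "(\<Sum>m<3. ((-y) ^ m) / fact m) = 1 - y + y^2/2"
    by (simp add: numeral_3_eq_3 power2_eq_square)
  have "exp t \<le> exp 1" using t assms by simp
  also have "\<dots> \<le> 3" using exp_le by simp
  finally have et: "exp t \<le> 3" .
  have "\<bar>exp (-y) - 1 + y - y^2/2\<bar> = \<bar>(exp t / 6) * (-y) ^ 3\<bar>" using t(2) s by (simp add: fact_numeral)
  also have "\<dots> = (exp t / 6) * \<bar>y\<bar>^3" by (simp add: abs_mult power_abs)
  also have "\<dots> \<le> \<bar>y\<bar>^3" using et by (intro mult_left_le_one_le) auto
  finally show ?thesis .
qed

lemma exp_inv:
  fixes y :: real
  assumes "\<bar>exp (-y) - 1\<bar> \<le> \<rho>" "\<rho> \<le> 1/2"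
  shows "\<bar>y\<bar> \<le> 2*\<rho>"
proof (cases "y \<ge> 0")
  case True
  have g: "exp (-y) \<ge> 1/2" using assms by linarith
  have "exp y - 1 \<ge> y" using exp_ge_add_one_self[of y] by linarith
  hence "1 - exp (-y) = exp (-y) * (exp y - 1)" by (simp add: exp_minus field_simps)
  also have "\<dots> \<ge> (1/2) * y" using g \<open>exp y - 1 \<ge> y\<close> True by (intro mult_mono) auto
  finally show ?thesis using assms True by linarith
next
  case False
  have "exp (-y) \<ge> 1 + (-y)" by (rule exp_ge_add_one_self)
  thus ?thesis using assms False by linarith
qed



locale setting =
  fixes B :: "(real^3) set" and S0 :: real and D0 :: "real^6" and u :: "real^3 \<Rightarrow> real^2"
  assumes fin: "finite B" and S0pos: "S0 > 0"
    and Ginv: "invertible (\<Sum>b\<in>B. outer_prod (xvec b) (xvec b))"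
    and unorm: "\<forall>b\<in>B. norm (u b) = 1"
begin

abbreviation "G \<equiv> (\<Sum>b\<in>B. outer_prod (xvec b) (xvec b))"
abbreviation "Sb b \<equiv> Sbar S0 D0 b"

lemma Sb_pos: "Sb b > 0" using S0pos by (simp add: Sbar_def)

lemma model_split: "S0 * exp (- (xvec b \<bullet> D)) = Sb b * exp (- (xvec b \<bullet> (D - D0)))"
  by (simp add: Sbar_def inner_diff_right exp_diff exp_minus field_simps)

lemma NLobj_D0: "NLobj B S0 D0 u \<sigma> e D0 = (\<Sum>b\<in>B. (Sobs S0 D0 u \<sigma> e b - Sb b)^2)"
  by (simp add: NLobj_def Sbar_def)

lemma G_delta: "v = matrix_inv G *v (\<Sum>b\<in>B. (xvec b \<bullet> v) *\<^sub>R xvec b)"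
  using matrix_inv_mv(1)[OF Ginv, of v] by (simp add: G_mv[OF fin])

lemma step1:
  assumes K: "K \<ge> 0"
  shows "\<exists>C1 \<sigma>1. \<sigma>1 > 0 \<and> C1 \<ge> 0 \<and> (\<forall>\<sigma> e D. 0 < \<sigma> \<longrightarrow> \<sigma> < \<sigma>1 \<longrightarrow> (\<forall>b\<in>B. norm (e b) \<le> K) \<longrightarrow>
            NLobj B S0 D0 u \<sigma> e D \<le> NLobj B S0 D0 u \<sigma> e D0 \<longrightarrow> norm (D - D0) \<le> C1 * \<sigma>)"
proof -
  obtain Cg where Cg: "Cg > 0" "\<And>x. norm (matrix_inv G *v x) \<le> norm x * Cg"
    using bounded_linear.pos_bounded[OF matrix_vector_mul_bounded_linear[of "matrix_inv G"]] by blast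
  define n where "n = real (card B)"
  define Sinv where "Sinv = (\<Sum>b\<in>B. 1 / Sb b)"
  define X where "X = (\<Sum>b\<in>B. norm (xvec b))"
  define A where "A = (n + 2) * K * Sinv"
  have n0: "n \<ge> 0" by (simp add: n_def)
  have Sinv0: "Sinv \<ge> 0" unfolding Sinv_def using Sb_pos by (intro sum_nonneg) (auto intro: less_imp_le)
  have X0: "X \<ge> 0" unfolding X_def by (intro sum_nonneg) auto
  have A0: "A \<ge> 0" unfolding A_def using n0 K Sinv0 by simp
  define \<sigma>1 where "\<sigma>1 = 1 / (2*A + 1)"
  define C1 where "C1 = Cg * X * 2 * A"
  have s1: "\<sigma>1 > 0" unfolding \<sigma>1_def using A0 by simp
  have C10: "C1 \<ge> 0" unfolding C1_def using Cg X0 A0 by simp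
  have main: "norm (D - D0) \<le> C1 * \<sigma>"
    if \<sigma>: "0 < \<sigma>" "\<sigma> < \<sigma>1" and e: "\<forall>b\<in>B. norm (e b) \<le> K"
      and F: "NLobj B S0 D0 u \<sigma> e D \<le> NLobj B S0 D0 u \<sigma> e D0" for \<sigma> e D
  proof -
    let ?S = "\<lambda>b. Sobs S0 D0 u \<sigma> e b"
    let ?y = "\<lambda>b. xvec b \<bullet> (D - D0)"
    have close: "\<bar>?S b - Sb b\<bar> \<le> \<sigma> * K" if "b \<in> B" for b
      using Sobs_close[of u b S0 D0 \<sigma> e] unorm that S0pos e \<sigma>
      by (smt (verit, best) mult_left_mono)
    have sq: "(?S b - Sb b)^2 \<le> (\<sigma> * K)^2" if "b \<in> B" for b
      using power_mono[OF close[OF that] abs_ge_zero, of 2] by simp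
    have "NLobj B S0 D0 u \<sigma> e D0 \<le> (\<Sum>b\<in>B. (\<sigma> * K)^2)"
      unfolding NLobj_D0 by (rule sum_mono) (rule sq)
    also have "\<dots> = n * (\<sigma> * K)^2" by (simp add: n_def)
    finally have F0: "NLobj B S0 D0 u \<sigma> e D0 \<le> n * (\<sigma> * K)^2" .
    have yb: "\<bar>?y b\<bar> \<le> 2 * (\<sigma> * A)" if b: "b \<in> B" for b
    proof -
      have "(?S b - S0 * exp (- (xvec b \<bullet> D)))^2 \<le> NLobj B S0 D0 u \<sigma> e D"
        unfolding NLobj_def by (rule member_le_sum[OF b _ fin]) auto
      also have "\<dots> \<le> n * (\<sigma> * K)^2" using F F0 by linarith
      also have "\<dots> \<le> ((n+1) * (\<sigma> * K))^2"
      proof -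
        have "0 \<le> n*n" by simp
        moreover have "(n+1)^2 = n*n + 2*n + 1" by (simp add: power2_eq_square algebra_simps)
        ultimately have "n \<le> (n+1)^2" using n0 by linarith
        hence "n * (\<sigma> * K)^2 \<le> (n+1)^2 * (\<sigma> * K)^2" by (intro mult_right_mono) auto
        thus ?thesis by (simp add: power_mult_distrib)
      qed
      finally have h2: "(?S b - S0 * exp (- (xvec b \<bullet> D)))^2 \<le> ((n+1) * (\<sigma> * K))^2" .
      have pos: "0 \<le> (n+1) * (\<sigma> * K)" using n0 \<sigma> K by simp
      have "\<bar>?S b - S0 * exp (- (xvec b \<bullet> D))\<bar> \<le> (n+1) * (\<sigma> * K)"
        by (rule power2_le_imp_le[OF _ pos]) (simp only: power2_abs h2)
      hence "\<bar>Sb b * exp (- ?y b) - Sb b\<bar> \<le> (n+2) * (\<sigma> * K)"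
        using close[OF b] unfolding model_split by (simp add: algebra_simps)
      hence "\<bar>Sb b * (exp (- ?y b) - 1)\<bar> \<le> (n+2) * (\<sigma> * K)"
        by (simp add: right_diff_distrib)
      hence "Sb b * \<bar>exp (- ?y b) - 1\<bar> \<le> (n+2) * (\<sigma> * K)"
        using Sb_pos[of b] by (simp add: abs_mult)
      hence "\<bar>exp (- ?y b) - 1\<bar> \<le> (n+2) * (\<sigma> * K) * (1 / Sb b)"
        using Sb_pos[of b] by (simp add: field_simps)
      also have "\<dots> \<le> (n+2) * (\<sigma> * K) * Sinv"
        unfolding Sinv_def using n0 \<sigma> K Sb_pos
        by (intro mult_left_mono member_le_sum[OF b _ fin]) (auto intro: less_imp_le)
      also have "\<dots> = \<sigma> * A" by (simp add: A_def)
      finally have r: "\<bar>exp (- ?y b) - 1\<bar> \<le> \<sigma> * A" .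
      have "\<sigma> * A \<le> 1/2"
      proof -
        have "\<sigma> * (2*A+1) \<le> 1" using \<sigma> A0 by (simp add: \<sigma>1_def field_simps)
        thus ?thesis using \<sigma> A0 by (simp add: algebra_simps)
      qed
      thus ?thesis using exp_inv[OF r] by simp
    qed
    have "norm (D - D0) = norm (matrix_inv G *v (\<Sum>b\<in>B. ?y b *\<^sub>R xvec b))"
      using G_delta[of "D - D0"] by simp
    also have "\<dots> \<le> norm (\<Sum>b\<in>B. ?y b *\<^sub>R xvec b) * Cg" by (rule Cg)
    also have "\<dots> \<le> (\<Sum>b\<in>B. (2 * (\<sigma> * A)) * norm (xvec b)) * Cg"
    proof (intro mult_right_mono)
      show "norm (\<Sum>b\<in>B. ?y b *\<^sub>R xvec b) \<le> (\<Sum>b\<in>B. (2 * (\<sigma> * A)) * norm (xvec b))"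
        by (rule order_trans[OF norm_sum sum_mono]) (auto intro: mult_right_mono yb)
    qed (use Cg in auto)
    also have "\<dots> = C1 * \<sigma>" by (simp add: C1_def X_def sum_distrib_left[symmetric] algebra_simps)
    finally show ?thesis .
  qed
  show ?thesis using s1 C10 main by blast
qed

lemma NLobj_cont: "continuous_on S (NLobj B S0 D0 u \<sigma> e)"
  unfolding NLobj_def by (intro continuous_intros)

lemma exists_min:
  assumes "\<And>D. NLobj B S0 D0 u \<sigma> e D \<le> NLobj B S0 D0 u \<sigma> e D0 \<Longrightarrow> norm (D - D0) \<le> 1"
  shows "\<exists>D. \<forall>D'. NLobj B S0 D0 u \<sigma> e D \<le> NLobj B S0 D0 u \<sigma> e D'"
proof -
  let ?F = "NLobj B S0 D0 u \<sigma> e"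
  have "\<exists>x\<in>cball D0 1. \<forall>y\<in>cball D0 1. ?F x \<le> ?F y"
    by (rule continuous_attains_inf[OF compact_cball]) (auto intro: NLobj_cont)
  then obtain D where D: "D \<in> cball D0 1" "\<forall>y\<in>cball D0 1. ?F D \<le> ?F y" by blast
  have "?F D \<le> ?F D'" for D'
  proof (cases "D' \<in> cball D0 1")
    case True thus ?thesis using D by auto
  next
    case False
    have "?F D \<le> ?F D0" using D by auto
    show ?thesis
    proof (rule ccontr)
      assume "\<not> ?F D \<le> ?F D'"
      hence "?F D' \<le> ?F D0" using \<open>?F D \<le> ?F D0\<close> by linarith
      hence "norm (D' - D0) \<le> 1" by (rule assms)
      thus False using False by (simp add: dist_norm norm_minus_commute)
    qed
  qed
  thus ?thesis by blast
qed

end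


context setting begin

lemma stationary:
  assumes min: "\<forall>D'. NLobj B S0 D0 u \<sigma> e D \<le> NLobj B S0 D0 u \<sigma> e D'"
  shows "(\<Sum>b\<in>B. ((Sobs S0 D0 u \<sigma> e b - S0 * exp (- (xvec b \<bullet> D))) * (S0 * exp (- (xvec b \<bullet> D)))) *\<^sub>R xvec b) = 0"
proof -
  let ?S = "\<lambda>b. Sobs S0 D0 u \<sigma> e b"
  let ?f = "\<lambda>b. S0 * exp (- (xvec b \<bullet> D))"
  define V where "V = (\<Sum>b\<in>B. ((?S b - ?f b) * ?f b) *\<^sub>R xvec b)"
  define \<phi> where "\<phi> = (\<lambda>t. \<Sum>b\<in>B. (?S b - S0 * exp (- (xvec b \<bullet> D + t * (xvec b \<bullet> V))))^2)"
  have phiF: "\<phi> t = NLobj B S0 D0 u \<sigma> e (D + t *\<^sub>R V)" for t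
    by (simp add: \<phi>_def NLobj_def inner_add_right)
  have der: "(\<phi> has_real_derivative (\<Sum>b\<in>B. 2 * (?S b - ?f b) * (?f b * (xvec b \<bullet> V)))) (at 0)"
    unfolding \<phi>_def
    by (auto intro!: derivative_eq_intros sum.cong simp: algebra_simps)
  have "(\<Sum>b\<in>B. 2 * (?S b - ?f b) * (?f b * (xvec b \<bullet> V))) = 0"
  proof (rule DERIV_local_min[OF der zero_less_one], intro allI impI)
    fix y :: real
    show "\<phi> 0 \<le> \<phi> y" using min unfolding phiF by simp
  qed
  moreover have "(\<Sum>b\<in>B. 2 * (?S b - ?f b) * (?f b * (xvec b \<bullet> V))) = 2 * (V \<bullet> V)"
    unfolding V_def[of] inner_sum_left by (simp add: V_def[symmetric] sum_distrib_left algebra_simps)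
  ultimately have "V \<bullet> V = 0" by simp
  thus ?thesis unfolding V_def by simp
qed

end


lemma mv_scaleR_right: "(A::real^'n^'m) *v (c *\<^sub>R v) = c *\<^sub>R (A *v v)"
  by (simp add: vec_eq_iff matrix_vector_mult_def sum_distrib_left algebra_simps)

lemma mv_diff_right: "(A::real^'n^'m) *v (v - w) = A *v v - A *v w"
  by (simp add: vec_eq_iff matrix_vector_mult_def sum_subtractf algebra_simps)

lemma mv_neg_right: "(A::real^'n^'m) *v (- v) = - (A *v v)"
  by (simp add: vec_eq_iff matrix_vector_mult_def sum_negf algebra_simps)

locale core = setting +
  fixes W :: "'w set" and e :: "'w \<Rightarrow> real^3 \<Rightarrow> real^2" and K :: real and Dh :: "real \<Rightarrow> 'w \<Rightarrow> real^6"
  assumes K0: "K \<ge> 0" and eK: "\<forall>\<omega>\<in>W. \<forall>b\<in>B. norm (e \<omega> b) \<le> K"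
    and minass: "\<forall>\<sigma>>0. \<forall>\<omega>\<in>W. (\<exists>D. \<forall>D'. NLobj B S0 D0 u \<sigma> (e \<omega>) D \<le> NLobj B S0 D0 u \<sigma> (e \<omega>) D') \<longrightarrow>
           (\<forall>D'. NLobj B S0 D0 u \<sigma> (e \<omega>) (Dh \<sigma> \<omega>) \<le> NLobj B S0 D0 u \<sigma> (e \<omega>) D')"
begin

definition "cS \<sigma> \<omega> b = Sobs S0 D0 u \<sigma> (e \<omega>) b"
definition "cdl \<sigma> \<omega> = Dh \<sigma> \<omega> - D0"
definition "cy b \<sigma> \<omega> = xvec b \<bullet> cdl \<sigma> \<omega>"
definition "cw b \<sigma> \<omega> = cS \<sigma> \<omega> b - Sb b"
definition "ca b \<omega> = u b \<bullet> e \<omega> b"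
definition "cne b \<omega> = norm (e \<omega> b)"
definition "cc b \<omega> = ((cne b \<omega>)^2 - (ca b \<omega>)^2) / (2 * Sb b)"
definition "cg b \<sigma> \<omega> = exp (- cy b \<sigma> \<omega>)"
definition "cq b \<sigma> \<omega> = cg b \<sigma> \<omega> - 1 + cy b \<sigma> \<omega>"
definition "cr b \<sigma> \<omega> = cq b \<sigma> \<omega> - (cy b \<sigma> \<omega>)^2 / 2"
definition "cE b \<sigma> \<omega> = Sb b * (2 * Sb b * cy b \<sigma> \<omega> * cq b \<sigma> \<omega> + cq b \<sigma> \<omega> * cw b \<sigma> \<omega> - Sb b * (cq b \<sigma> \<omega>)^2)
     - (Sb b)^2 * cr b \<sigma> \<omega>"
definition "cd1 \<omega> = D1NL B S0 D0 u (e \<omega>)"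
definition "cd2 \<omega> = D2NL B S0 D0 u (e \<omega>)"
definition "cz b \<omega> = xvec b \<bullet> cd1 \<omega>"
definition "coef3 b \<sigma> \<omega> = - Sb b * (cw b \<sigma> \<omega> - \<sigma> * ca b \<omega> - \<sigma>^2 * cc b \<omega>)
   + (3/2) * (Sb b)^2 * ((cy b \<sigma> \<omega>)^2 - \<sigma>^2 * (cz b \<omega>)^2)
   + Sb b * (cy b \<sigma> \<omega> * cw b \<sigma> \<omega> - \<sigma>^2 * cz b \<omega> * ca b \<omega>) - cE b \<sigma> \<omega>"
definition "coef2 b \<sigma> \<omega> = - (Sb b * (cw b \<sigma> \<omega> - \<sigma> * ca b \<omega>) - (3/2) * (Sb b)^2 * (cy b \<sigma> \<omega>)^2
   - Sb b * cy b \<sigma> \<omega> * cw b \<sigma> \<omega> + cE b \<sigma> \<omega>)"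

abbreviation "MM \<equiv> Mmat B S0 D0"

lemma MMinv: "invertible MM" by (rule M_invertible[OF fin S0pos Ginv])

lemma pt_ident:
  "(cS \<sigma> \<omega> b - S0 * exp (- (xvec b \<bullet> Dh \<sigma> \<omega>))) * (S0 * exp (- (xvec b \<bullet> Dh \<sigma> \<omega>)))
   = Sb b * cw b \<sigma> \<omega> + (Sb b)^2 * cy b \<sigma> \<omega> - (3/2) * (Sb b)^2 * (cy b \<sigma> \<omega>)^2
     - Sb b * cy b \<sigma> \<omega> * cw b \<sigma> \<omega> + cE b \<sigma> \<omega>"
proof -
  have f: "S0 * exp (- (xvec b \<bullet> Dh \<sigma> \<omega>)) = Sb b * cg b \<sigma> \<omega>"
    by (simp add: model_split cg_def cy_def cdl_def)
  have S: "cS \<sigma> \<omega> b = Sb b + cw b \<sigma> \<omega>" by (simp add: cw_def)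
  have g: "cg b \<sigma> \<omega> = 1 - cy b \<sigma> \<omega> + cq b \<sigma> \<omega>" by (simp add: cq_def)
  show ?thesis unfolding f S g cE_def cr_def
    by (simp add: algebra_simps power2_eq_square)
qed

lemma Mdl: "MM *v cdl \<sigma> \<omega> = (\<Sum>b\<in>B. ((Sb b)^2 * cy b \<sigma> \<omega>) *\<^sub>R xvec b)"
  by (simp add: M_mv[OF fin] cy_def)

lemma Md1: "MM *v cd1 \<omega> = (\<Sum>b\<in>B. (- (Sb b * ca b \<omega>)) *\<^sub>R xvec b)"
  unfolding cd1_def D1NL_def
  by (simp add: mv_neg_right matrix_inv_mv(2)[OF MMinv] ca_def sum_negf)

lemma Md2: "MM *v cd2 \<omega> = (\<Sum>b\<in>B. ((Sb b)^2 * (cz b \<omega>)^2 + (1/2) * (Sb b * cz b \<omega> + ca b \<omega>)^2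
              - (1/2) * (cne b \<omega>)^2) *\<^sub>R xvec b)"
  unfolding cd2_def D2NL_def Let_def matrix_inv_mv(2)[OF MMinv]
  by (simp add: cz_def cd1_def ca_def cne_def scaleR_sum_right sum_subtractf[symmetric] sum.distrib[symmetric]
      scaleR_add_left scaleR_diff_left)

lemma stat_core:
  assumes "\<forall>D'. NLobj B S0 D0 u \<sigma> (e \<omega>) (Dh \<sigma> \<omega>) \<le> NLobj B S0 D0 u \<sigma> (e \<omega>) D'"
  shows "(\<Sum>b\<in>B. (Sb b * cw b \<sigma> \<omega> + (Sb b)^2 * cy b \<sigma> \<omega> - (3/2) * (Sb b)^2 * (cy b \<sigma> \<omega>)^2
     - Sb b * cy b \<sigma> \<omega> * cw b \<sigma> \<omega> + cE b \<sigma> \<omega>) *\<^sub>R xvec b) = 0"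
  using stationary[OF assms] pt_ident[of \<sigma> \<omega>] unfolding cS_def by simp

lemma key3:
  assumes "\<forall>D'. NLobj B S0 D0 u \<sigma> (e \<omega>) (Dh \<sigma> \<omega>) \<le> NLobj B S0 D0 u \<sigma> (e \<omega>) D'"
  shows "MM *v (cdl \<sigma> \<omega> - \<sigma> *\<^sub>R cd1 \<omega> - \<sigma>^2 *\<^sub>R cd2 \<omega>) = (\<Sum>b\<in>B. coef3 b \<sigma> \<omega> *\<^sub>R xvec b)"
proof -
  have "MM *v (cdl \<sigma> \<omega> - \<sigma> *\<^sub>R cd1 \<omega> - \<sigma>^2 *\<^sub>R cd2 \<omega>)
      = MM *v cdl \<sigma> \<omega> - (\<Sum>b\<in>B. (Sb b * cw b \<sigma> \<omega> + (Sb b)^2 * cy b \<sigma> \<omega> - (3/2) * (Sb b)^2 * (cy b \<sigma> \<omega>)^2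
     - Sb b * cy b \<sigma> \<omega> * cw b \<sigma> \<omega> + cE b \<sigma> \<omega>) *\<^sub>R xvec b) - \<sigma> *\<^sub>R (MM *v cd1 \<omega>) - \<sigma>^2 *\<^sub>R (MM *v cd2 \<omega>)"
    using stat_core[OF assms] by (simp add: mv_diff_right mv_scaleR_right)
  also have "\<dots> = (\<Sum>b\<in>B. ((Sb b)^2 * cy b \<sigma> \<omega> - (Sb b * cw b \<sigma> \<omega> + (Sb b)^2 * cy b \<sigma> \<omega> - (3/2) * (Sb b)^2 * (cy b \<sigma> \<omega>)^2
     - Sb b * cy b \<sigma> \<omega> * cw b \<sigma> \<omega> + cE b \<sigma> \<omega>) - \<sigma> * (- (Sb b * ca b \<omega>))
     - \<sigma>^2 * ((Sb b)^2 * (cz b \<omega>)^2 + (1/2) * (Sb b * cz b \<omega> + ca b \<omega>)^2 - (1/2) * (cne b \<omega>)^2)) *\<^sub>R xvec b)"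
    unfolding Mdl Md1 Md2
    by (simp only: scaleR_sum_right scaleR_scaleR sum_subtractf[symmetric] scaleR_diff_left[symmetric])
  also have "\<dots> = (\<Sum>b\<in>B. coef3 b \<sigma> \<omega> *\<^sub>R xvec b)"
    apply (rule sum.cong[OF refl])
    subgoal for b
    proof -
      have nz: "Sb b \<noteq> 0" using Sb_pos[of b] by simp
      show ?thesis by (simp add: coef3_def cc_def field_simps power2_eq_square nz)
    qed
    done
  finally show ?thesis .
qed

lemma key2:
  assumes "\<forall>D'. NLobj B S0 D0 u \<sigma> (e \<omega>) (Dh \<sigma> \<omega>) \<le> NLobj B S0 D0 u \<sigma> (e \<omega>) D'"
  shows "MM *v (cdl \<sigma> \<omega> - \<sigma> *\<^sub>R cd1 \<omega>) = (\<Sum>b\<in>B. coef2 b \<sigma> \<omega> *\<^sub>R xvec b)"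
proof -
  have "MM *v (cdl \<sigma> \<omega> - \<sigma> *\<^sub>R cd1 \<omega>)
      = MM *v cdl \<sigma> \<omega> - (\<Sum>b\<in>B. (Sb b * cw b \<sigma> \<omega> + (Sb b)^2 * cy b \<sigma> \<omega> - (3/2) * (Sb b)^2 * (cy b \<sigma> \<omega>)^2
     - Sb b * cy b \<sigma> \<omega> * cw b \<sigma> \<omega> + cE b \<sigma> \<omega>) *\<^sub>R xvec b) - \<sigma> *\<^sub>R (MM *v cd1 \<omega>)"
    using stat_core[OF assms] by (simp add: mv_diff_right mv_scaleR_right)
  also have "\<dots> = (\<Sum>b\<in>B. ((Sb b)^2 * cy b \<sigma> \<omega> - (Sb b * cw b \<sigma> \<omega> + (Sb b)^2 * cy b \<sigma> \<omega> - (3/2) * (Sb b)^2 * (cy b \<sigma> \<omega>)^2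
     - Sb b * cy b \<sigma> \<omega> * cw b \<sigma> \<omega> + cE b \<sigma> \<omega>) - \<sigma> * (- (Sb b * ca b \<omega>))) *\<^sub>R xvec b)"
    unfolding Mdl Md1
    by (simp only: scaleR_sum_right scaleR_scaleR sum_subtractf[symmetric] scaleR_diff_left[symmetric])
  also have "\<dots> = (\<Sum>b\<in>B. coef2 b \<sigma> \<omega> *\<^sub>R xvec b)"
    by (rule sum.cong[OF refl]) (simp add: coef2_def algebra_simps)
  finally show ?thesis .
qed

end


lemma bo_eq: "bo W f k \<Longrightarrow> (\<And>\<sigma> \<omega>. \<sigma> > 0 \<Longrightarrow> \<omega> \<in> W \<Longrightarrow> f \<sigma> \<omega> = g \<sigma> \<omega>) \<Longrightarrow> bo W g k"
  by (erule bo_cong) (use eventually_at_right_less[of 0] in \<open>eventually_elim, auto\<close>)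

lemma bo_m: "bo W f i \<Longrightarrow> bo W g j \<Longrightarrow> k \<le> i + j \<Longrightarrow> bo W (\<lambda>\<sigma> \<omega>. (f \<sigma> \<omega> :: real) * g \<sigma> \<omega>) k"
  using bo_mono[OF bo_mult[of W f i g j]] by simp

lemma bo_s: "bo W f i \<Longrightarrow> bo W g j \<Longrightarrow> k \<le> i + j \<Longrightarrow> bo W (\<lambda>\<sigma> \<omega>. (f \<sigma> \<omega> :: real) *\<^sub>R g \<sigma> \<omega>) k"
  using bo_mono[OF bo_mult[of W f i g j]] by simp

lemma bo_c: "bo W (\<lambda>\<sigma> \<omega>. c) 0"
  by (rule bo_const[of W "\<lambda>_. c" "norm c"]) auto

lemma bo_cm: "bo W f k \<Longrightarrow> bo W (\<lambda>\<sigma> \<omega>. (c::real) * f \<sigma> \<omega>) k"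
  using bo_scale[of W f k c] by simp

context core begin

lemma ev_min: "\<exists>C1. \<forall>\<^sub>F \<sigma> in at_right 0. \<forall>\<omega>\<in>W. (\<forall>D'. NLobj B S0 D0 u \<sigma> (e \<omega>) (Dh \<sigma> \<omega>) \<le> NLobj B S0 D0 u \<sigma> (e \<omega>) D')
            \<and> norm (cdl \<sigma> \<omega>) \<le> C1 * \<sigma>"
proof -
  obtain C1 \<sigma>1 where s1: "\<sigma>1 > 0" "C1 \<ge> 0" and st: "\<And>\<sigma> e D. 0 < \<sigma> \<Longrightarrow> \<sigma> < \<sigma>1 \<Longrightarrow> (\<forall>b\<in>B. norm (e b) \<le> K) \<Longrightarrow>
            NLobj B S0 D0 u \<sigma> e D \<le> NLobj B S0 D0 u \<sigma> e D0 \<Longrightarrow> norm (D - D0) \<le> C1 * \<sigma>"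
    using step1[OF K0] by blast
  have "min \<sigma>1 (1 / (C1 + 1)) > 0" using s1 by simp
  from ev_small[OF this] have "\<forall>\<^sub>F \<sigma> in at_right 0. \<forall>\<omega>\<in>W. (\<forall>D'. NLobj B S0 D0 u \<sigma> (e \<omega>) (Dh \<sigma> \<omega>) \<le> NLobj B S0 D0 u \<sigma> (e \<omega>) D')
            \<and> norm (cdl \<sigma> \<omega>) \<le> C1 * \<sigma>"
  proof eventually_elim
    case (elim \<sigma>)
    show ?case
    proof
      fix \<omega> assume w: "\<omega> \<in> W"
      have eb: "\<forall>b\<in>B. norm (e \<omega> b) \<le> K" using eK w by auto
      have small: "C1 * \<sigma> \<le> 1"
      proof -
        have "\<sigma> * (C1 + 1) < 1" using elim s1 by (simp add: field_simps)
        thus ?thesis using elim s1 by (simp add: algebra_simps)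
      qed
      have "\<exists>D. \<forall>D'. NLobj B S0 D0 u \<sigma> (e \<omega>) D \<le> NLobj B S0 D0 u \<sigma> (e \<omega>) D'"
      proof (rule exists_min)
        fix D assume "NLobj B S0 D0 u \<sigma> (e \<omega>) D \<le> NLobj B S0 D0 u \<sigma> (e \<omega>) D0"
        hence "norm (D - D0) \<le> C1 * \<sigma>" using elim eb by (intro st) auto
        thus "norm (D - D0) \<le> 1" using small by linarith
      qed
      hence m: "\<forall>D'. NLobj B S0 D0 u \<sigma> (e \<omega>) (Dh \<sigma> \<omega>) \<le> NLobj B S0 D0 u \<sigma> (e \<omega>) D'"
        using minass elim w by auto
      have "norm (cdl \<sigma> \<omega>) \<le> C1 * \<sigma>" unfolding cdl_def using st[of \<sigma> "e \<omega>" "Dh \<sigma> \<omega>"] elim eb m by auto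
      thus "(\<forall>D'. NLobj B S0 D0 u \<sigma> (e \<omega>) (Dh \<sigma> \<omega>) \<le> NLobj B S0 D0 u \<sigma> (e \<omega>) D') \<and> norm (cdl \<sigma> \<omega>) \<le> C1 * \<sigma>"
        using m by simp
    qed
  qed
  thus ?thesis by blast
qed

lemma ev_minimizer: "\<forall>\<^sub>F \<sigma> in at_right 0. \<forall>\<omega>\<in>W. \<forall>D'. NLobj B S0 D0 u \<sigma> (e \<omega>) (Dh \<sigma> \<omega>) \<le> NLobj B S0 D0 u \<sigma> (e \<omega>) D'"
proof -
  obtain C1 where "\<forall>\<^sub>F \<sigma> in at_right 0. \<forall>\<omega>\<in>W. (\<forall>D'. NLobj B S0 D0 u \<sigma> (e \<omega>) (Dh \<sigma> \<omega>) \<le> NLobj B S0 D0 u \<sigma> (e \<omega>) D')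
            \<and> norm (cdl \<sigma> \<omega>) \<le> C1 * \<sigma>" using ev_min by blast
  thus ?thesis by eventually_elim auto
qed

lemma bo_dl: "bo W cdl 1"
proof -
  obtain C1 where "\<forall>\<^sub>F \<sigma> in at_right 0. \<forall>\<omega>\<in>W. (\<forall>D'. NLobj B S0 D0 u \<sigma> (e \<omega>) (Dh \<sigma> \<omega>) \<le> NLobj B S0 D0 u \<sigma> (e \<omega>) D')
            \<and> norm (cdl \<sigma> \<omega>) \<le> C1 * \<sigma>" using ev_min by blast
  hence "\<forall>\<^sub>F \<sigma> in at_right 0. \<forall>\<omega>\<in>W. norm (cdl \<sigma> \<omega>) \<le> C1 * \<sigma>^1" by eventually_elim auto
  thus ?thesis by (rule boI)
qed

lemma bo_y: "bo W (cy b) 1"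
  unfolding cy_def[abs_def] by (rule bo_linear[OF bounded_linear_inner_right bo_dl])

lemma bo_w: "b \<in> B \<Longrightarrow> bo W (cw b) 1"
proof (rule boI[of _ _ K])
  assume b: "b \<in> B"
  show "\<forall>\<^sub>F \<sigma> in at_right 0. \<forall>\<omega>\<in>W. norm (cw b \<sigma> \<omega>) \<le> K * \<sigma>^1"
    using eventually_at_right_less[of 0]
  proof eventually_elim
    case (elim \<sigma>)
    show ?case
    proof
      fix \<omega> assume w: "\<omega> \<in> W"
      have "\<bar>cw b \<sigma> \<omega>\<bar> \<le> \<bar>\<sigma>\<bar> * norm (e \<omega> b)"
        unfolding cw_def cS_def using Sobs_close[of u b S0 D0 \<sigma> "e \<omega>"] unorm b S0pos by auto
      also have "\<dots> \<le> \<sigma> * K" using elim eK w b by (auto intro: mult_left_mono)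
      finally show "norm (cw b \<sigma> \<omega>) \<le> K * \<sigma>^1" by (simp add: algebra_simps)
    qed
  qed
qed

lemma bo_a: "b \<in> B \<Longrightarrow> bo W (\<lambda>\<sigma> \<omega>. ca b \<omega>) 0"
proof (rule bo_const[of W _ K], intro ballI)
  fix \<omega> assume b: "b \<in> B" and w: "\<omega> \<in> W"
  have "\<bar>u b \<bullet> e \<omega> b\<bar> \<le> norm (u b) * norm (e \<omega> b)" by (rule Cauchy_Schwarz_ineq2)
  moreover have "norm (e \<omega> b) \<le> K" using eK b w by auto
  ultimately show "norm (ca b \<omega>) \<le> K" using unorm b by (auto simp: ca_def)
qed

lemma bo_ne: "b \<in> B \<Longrightarrow> bo W (\<lambda>\<sigma> \<omega>. cne b \<omega>) 0"
  by (rule bo_const[of W _ K]) (use eK in \<open>auto simp: cne_def\<close>)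

lemma bo_cc: "b \<in> B \<Longrightarrow> bo W (\<lambda>\<sigma> \<omega>. cc b \<omega>) 0"
proof -
  assume b: "b \<in> B"
  have "bo W (\<lambda>\<sigma> \<omega>. (1 / (2 * Sb b)) * (cne b \<omega> * cne b \<omega> - ca b \<omega> * ca b \<omega>)) 0"
    by (intro bo_cm bo_diff bo_m[of _ _ 0 _ 0] bo_ne bo_a b) auto
  thus ?thesis by (rule bo_eq) (simp add: cc_def power2_eq_square)
qed

lemma bo_d1: "bo W (\<lambda>\<sigma> \<omega>. cd1 \<omega>) 0"
proof -
  have "bo W (\<lambda>\<sigma> \<omega>. - (matrix_inv MM *v (\<Sum>b\<in>B. (Sb b * ca b \<omega>) *\<^sub>R xvec b))) 0"
    by (intro bo_neg bo_linear[OF matrix_vector_mul_bounded_linear] bo_sum fin bo_s[of _ _ 0 _ 0]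
        bo_cm bo_a bo_c) auto
  thus ?thesis by (rule bo_eq) (simp add: cd1_def D1NL_def ca_def)
qed

lemma bo_z: "bo W (\<lambda>\<sigma> \<omega>. cz b \<omega>) 0"
  unfolding cz_def by (rule bo_linear[OF bounded_linear_inner_right bo_d1])

lemma bo_r: "bo W (cr b) 3"
proof (rule bo_cube[OF bo_y])
  show "\<forall>\<^sub>F \<sigma> in at_right 0. \<forall>\<omega>\<in>W. norm (cr b \<sigma> \<omega>) \<le> norm (cy b \<sigma> \<omega>) ^ 3"
    using bo_small[OF bo_y[of b]]
  proof eventually_elim
    case (elim \<sigma>)
    thus ?case using exp_rem by (auto simp: cr_def cq_def cg_def)
  qed
qed

lemma bo_q: "bo W (cq b) 2"
proof -
  have "bo W (\<lambda>\<sigma> \<omega>. (1/2) * (cy b \<sigma> \<omega> * cy b \<sigma> \<omega>) + cr b \<sigma> \<omega>) 2"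
    by (intro bo_add bo_cm bo_m[OF bo_y bo_y] bo_mono[OF bo_r]) auto
  thus ?thesis by (rule bo_eq) (simp add: cr_def power2_eq_square)
qed

lemma bo_E: "b \<in> B \<Longrightarrow> bo W (cE b) 3"
proof -
  assume b: "b \<in> B"
  have "bo W (\<lambda>\<sigma> \<omega>. Sb b * (2 * Sb b * (cy b \<sigma> \<omega> * cq b \<sigma> \<omega>) + cq b \<sigma> \<omega> * cw b \<sigma> \<omega> - Sb b * (cq b \<sigma> \<omega> * cq b \<sigma> \<omega>))
     - (Sb b)^2 * cr b \<sigma> \<omega>) 3"
    by (intro bo_diff bo_add bo_cm bo_m[OF bo_y bo_q] bo_m[OF bo_q bo_w[OF b]] bo_m[OF bo_q bo_q] bo_r) auto
  thus ?thesis by (rule bo_eq) (simp add: cE_def power2_eq_square algebra_simps)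
qed

end


context core begin

lemma w_ident: "b \<in> B \<Longrightarrow> cw b \<sigma> \<omega> - \<sigma> * ca b \<omega> = (\<sigma>^2 * (cne b \<omega>)^2 - (cw b \<sigma> \<omega>)^2) / (2 * Sb b)"
proof -
  assume b: "b \<in> B"
  have h: "(Sb b + cw b \<sigma> \<omega>)^2 = (Sb b)^2 + 2*\<sigma>*Sb b*ca b \<omega> + \<sigma>^2 * (cne b \<omega>)^2"
    using Sobs_sq[of u b S0 D0 \<sigma> "e \<omega>"] unorm b by (simp add: cw_def cS_def ca_def cne_def)
  have nz: "Sb b \<noteq> 0" using Sb_pos[of b] by simp
  have "2 * Sb b * (cw b \<sigma> \<omega> - \<sigma> * ca b \<omega>) = \<sigma>^2 * (cne b \<omega>)^2 - (cw b \<sigma> \<omega>)^2"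
    using h by (simp add: power2_eq_square algebra_simps)
  thus ?thesis using nz by (simp add: field_simps)
qed

lemma bo_w1: "b \<in> B \<Longrightarrow> bo W (\<lambda>\<sigma> \<omega>. cw b \<sigma> \<omega> - \<sigma> * ca b \<omega>) 2"
proof -
  assume b: "b \<in> B"
  have s2: "bo W (\<lambda>\<sigma> \<omega>. \<sigma> * \<sigma>) 2" by (rule bo_m[OF bo_sigma bo_sigma]) simp
  have n2: "bo W (\<lambda>\<sigma> \<omega>. cne b \<omega> * cne b \<omega>) 0" by (rule bo_m[OF bo_ne[OF b] bo_ne[OF b]]) simp
  have t1: "bo W (\<lambda>\<sigma> \<omega>. (\<sigma> * \<sigma>) * (cne b \<omega> * cne b \<omega>)) 2" by (rule bo_m[OF s2 n2]) simp
  have t2: "bo W (\<lambda>\<sigma> \<omega>. cw b \<sigma> \<omega> * cw b \<sigma> \<omega>) 2" by (rule bo_m[OF bo_w[OF b] bo_w[OF b]]) simp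
  have "bo W (\<lambda>\<sigma> \<omega>. (1 / (2 * Sb b)) * ((\<sigma> * \<sigma>) * (cne b \<omega> * cne b \<omega>) - cw b \<sigma> \<omega> * cw b \<sigma> \<omega>)) 2"
    by (rule bo_cm[OF bo_diff[OF t1 t2]])
  thus ?thesis by (rule bo_eq) (simp add: w_ident[OF b] power2_eq_square)
qed

lemma w2_ident: "b \<in> B \<Longrightarrow> cw b \<sigma> \<omega> - \<sigma> * ca b \<omega> - \<sigma>^2 * cc b \<omega>
   = (- 1 / (2 * Sb b)) * ((cw b \<sigma> \<omega> - \<sigma> * ca b \<omega>) * (cw b \<sigma> \<omega> + \<sigma> * ca b \<omega>))"
proof -
  assume b: "b \<in> B"
  have nz: "Sb b \<noteq> 0" using Sb_pos[of b] by simp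
  have "cw b \<sigma> \<omega> - \<sigma> * ca b \<omega> - \<sigma>^2 * cc b \<omega>
      = (\<sigma>^2 * (cne b \<omega>)^2 - (cw b \<sigma> \<omega>)^2) / (2 * Sb b) - \<sigma>^2 * cc b \<omega>"
    using w_ident[OF b] by simp
  also have "\<dots> = (- 1 / (2 * Sb b)) * ((cw b \<sigma> \<omega> - \<sigma> * ca b \<omega>) * (cw b \<sigma> \<omega> + \<sigma> * ca b \<omega>))"
    using nz by (simp add: cc_def field_simps power2_eq_square)
  finally show ?thesis .
qed

lemma bo_w2: "b \<in> B \<Longrightarrow> bo W (\<lambda>\<sigma> \<omega>. cw b \<sigma> \<omega> - \<sigma> * ca b \<omega> - \<sigma>^2 * cc b \<omega>) 3"
proof -
  assume b: "b \<in> B"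
  have nz: "Sb b \<noteq> 0" using Sb_pos[of b] by simp
  have "bo W (\<lambda>\<sigma> \<omega>. (- 1 / (2 * Sb b)) * ((cw b \<sigma> \<omega> - \<sigma> * ca b \<omega>) * (cw b \<sigma> \<omega> + \<sigma> * ca b \<omega>))) 3"
  proof -
    have sa: "bo W (\<lambda>\<sigma> \<omega>. \<sigma> * ca b \<omega>) 1" by (rule bo_m[OF bo_sigma bo_a[OF b]]) simp
    have p: "bo W (\<lambda>\<sigma> \<omega>. cw b \<sigma> \<omega> + \<sigma> * ca b \<omega>) 1" by (rule bo_add[OF bo_w[OF b] sa])
    show ?thesis by (rule bo_cm[OF bo_m[OF bo_w1[OF b] p]]) simp
  qed
  thus ?thesis
    by (rule bo_eq) (simp add: w2_ident[OF b])
qed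

lemma bo_coef2: "b \<in> B \<Longrightarrow> bo W (coef2 b) 2"
proof -
  assume b: "b \<in> B"
  have "bo W (\<lambda>\<sigma> \<omega>. - (Sb b * (cw b \<sigma> \<omega> - \<sigma> * ca b \<omega>) - (3/2 * (Sb b)^2) * (cy b \<sigma> \<omega> * cy b \<sigma> \<omega>)
     - Sb b * (cy b \<sigma> \<omega> * cw b \<sigma> \<omega>) + cE b \<sigma> \<omega>)) 2"
  proof -
    have yy: "bo W (\<lambda>\<sigma> \<omega>. cy b \<sigma> \<omega> * cy b \<sigma> \<omega>) 2" by (rule bo_m[OF bo_y bo_y]) simp
    have yw: "bo W (\<lambda>\<sigma> \<omega>. cy b \<sigma> \<omega> * cw b \<sigma> \<omega>) 2" by (rule bo_m[OF bo_y bo_w[OF b]]) simp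
    have E2: "bo W (cE b) 2" by (rule bo_mono[OF bo_E[OF b]]) simp
    show ?thesis
      by (rule bo_neg[OF bo_add[OF bo_diff[OF bo_diff[OF bo_cm[OF bo_w1[OF b]] bo_cm[OF yy]] bo_cm[OF yw]] E2]])
  qed
  thus ?thesis by (rule bo_eq) (simp add: coef2_def power2_eq_square algebra_simps)
qed

lemma bo_A: "bo W (\<lambda>\<sigma> \<omega>. cdl \<sigma> \<omega> - \<sigma> *\<^sub>R cd1 \<omega>) 2"
proof -
  have "bo W (\<lambda>\<sigma> \<omega>. \<Sum>b\<in>B. coef2 b \<sigma> \<omega> *\<^sub>R xvec b) 2"
    by (intro bo_sum fin bo_s[OF bo_coef2 bo_c]) auto
  hence "bo W (\<lambda>\<sigma> \<omega>. MM *v (cdl \<sigma> \<omega> - \<sigma> *\<^sub>R cd1 \<omega>)) 2"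
    by (rule bo_cong) (use ev_minimizer in \<open>eventually_elim, auto simp: key2\<close>)
  hence "bo W (\<lambda>\<sigma> \<omega>. matrix_inv MM *v (MM *v (cdl \<sigma> \<omega> - \<sigma> *\<^sub>R cd1 \<omega>))) 2"
    by (rule bo_linear[OF matrix_vector_mul_bounded_linear])
  thus ?thesis by (simp add: matrix_inv_mv(1)[OF MMinv])
qed

lemma bo_yz: "bo W (\<lambda>\<sigma> \<omega>. cy b \<sigma> \<omega> - \<sigma> * cz b \<omega>) 2"
proof -
  have "bo W (\<lambda>\<sigma> \<omega>. xvec b \<bullet> (cdl \<sigma> \<omega> - \<sigma> *\<^sub>R cd1 \<omega>)) 2"
    by (rule bo_linear[OF bounded_linear_inner_right bo_A])
  thus ?thesis by (rule bo_eq) (simp add: cy_def cz_def inner_diff_right)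
qed

lemma bo_coef3: "b \<in> B \<Longrightarrow> bo W (coef3 b) 3"
proof -
  assume b: "b \<in> B"
  have "bo W (\<lambda>\<sigma> \<omega>. - Sb b * (cw b \<sigma> \<omega> - \<sigma> * ca b \<omega> - \<sigma>^2 * cc b \<omega>)
   + (3/2 * (Sb b)^2) * ((cy b \<sigma> \<omega> - \<sigma> * cz b \<omega>) * (cy b \<sigma> \<omega> + \<sigma> * cz b \<omega>))
   + Sb b * ((cy b \<sigma> \<omega> - \<sigma> * cz b \<omega>) * cw b \<sigma> \<omega> + (\<sigma> * cz b \<omega>) * (cw b \<sigma> \<omega> - \<sigma> * ca b \<omega>)) - cE b \<sigma> \<omega>) 3"
  proof -
    have sz: "bo W (\<lambda>\<sigma> \<omega>. \<sigma> * cz b \<omega>) 1" by (rule bo_m[OF bo_sigma bo_z]) simp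
    have T2: "bo W (\<lambda>\<sigma> \<omega>. (cy b \<sigma> \<omega> - \<sigma> * cz b \<omega>) * (cy b \<sigma> \<omega> + \<sigma> * cz b \<omega>)) 3"
      by (rule bo_m[OF bo_yz bo_add[OF bo_y sz]]) simp
    have T3a: "bo W (\<lambda>\<sigma> \<omega>. (cy b \<sigma> \<omega> - \<sigma> * cz b \<omega>) * cw b \<sigma> \<omega>) 3"
      by (rule bo_m[OF bo_yz bo_w[OF b]]) simp
    have T3b: "bo W (\<lambda>\<sigma> \<omega>. (\<sigma> * cz b \<omega>) * (cw b \<sigma> \<omega> - \<sigma> * ca b \<omega>)) 3"
      by (rule bo_m[OF sz bo_w1[OF b]]) simp
    show ?thesis
      by (rule bo_diff[OF bo_add[OF bo_add[OF bo_cm[OF bo_w2[OF b]] bo_cm[OF T2]] bo_cm[OF bo_add[OF T3a T3b]]] bo_E[OF b]])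
  qed
  thus ?thesis by (rule bo_eq) (simp add: coef3_def power2_eq_square algebra_simps)
qed

lemma bo_final: "bo W (\<lambda>\<sigma> \<omega>. cdl \<sigma> \<omega> - \<sigma> *\<^sub>R cd1 \<omega> - \<sigma>^2 *\<^sub>R cd2 \<omega>) 3"
proof -
  have "bo W (\<lambda>\<sigma> \<omega>. \<Sum>b\<in>B. coef3 b \<sigma> \<omega> *\<^sub>R xvec b) 3"
    by (intro bo_sum fin bo_s[OF bo_coef3 bo_c]) auto
  hence "bo W (\<lambda>\<sigma> \<omega>. MM *v (cdl \<sigma> \<omega> - \<sigma> *\<^sub>R cd1 \<omega> - \<sigma>^2 *\<^sub>R cd2 \<omega>)) 3"
    by (rule bo_cong) (use ev_minimizer in \<open>eventually_elim, auto simp: key3\<close>)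
  hence "bo W (\<lambda>\<sigma> \<omega>. matrix_inv MM *v (MM *v (cdl \<sigma> \<omega> - \<sigma> *\<^sub>R cd1 \<omega> - \<sigma>^2 *\<^sub>R cd2 \<omega>))) 3"
    by (rule bo_linear[OF matrix_vector_mul_bounded_linear])
  thus ?thesis by (simp add: matrix_inv_mv(1)[OF MMinv])
qed

end


lemma tight_finite:
  fixes X :: "'i \<Rightarrow> 'a \<Rightarrow> 'v::real_normed_vector"
  assumes P: "prob_space M" and fin: "finite B" and meas: "\<And>b. b \<in> B \<Longrightarrow> X b \<in> borel_measurable M"
    and ep: "ep > 0"
  shows "\<exists>K\<ge>0. {\<omega>\<in>space M. \<forall>b\<in>B. norm (X b \<omega>) \<le> K} \<in> sets M \<and>
               measure M {\<omega>\<in>space M. \<forall>b\<in>B. norm (X b \<omega>) \<le> K} \<ge> 1 - ep"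
proof -
  interpret prob_space M by (rule P)
  define Ab where "Ab b n = {\<omega>\<in>space M. real n < norm (X b \<omega>)}" for b n
  have Abm: "Ab b n \<in> sets M" if "b \<in> B" for b n
  proof -
    have [measurable]: "X b \<in> borel_measurable M" using meas that .
    show ?thesis unfolding Ab_def by measurable
  qed
  define \<eta> where "\<eta> = ep / (real (card B) + 1)"
  have eta: "\<eta> > 0" using ep by (simp add: \<eta>_def)
  have ev: "\<forall>\<^sub>F n in sequentially. measure M (Ab b n) < \<eta>" if b: "b \<in> B" for b
  proof -
    have dec: "decseq (Ab b)" unfolding decseq_def Ab_def by auto
    have "(\<lambda>n. measure M (Ab b n)) \<longlonglongrightarrow> measure M (\<Inter>n. Ab b n)"
      by (rule Lim_measure_decseq) (use Abm[OF b] dec in auto)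
    moreover have "(\<Inter>n. Ab b n) = {}"
    proof -
      have "\<omega> \<notin> (\<Inter>n. Ab b n)" for \<omega>
      proof
        assume "\<omega> \<in> (\<Inter>n. Ab b n)"
        hence "real (nat \<lceil>norm (X b \<omega>)\<rceil>) < norm (X b \<omega>)" unfolding Ab_def by blast
        thus False by linarith
      qed
      thus ?thesis by blast
    qed
    ultimately have "(\<lambda>n. measure M (Ab b n)) \<longlonglongrightarrow> 0" by simp
    thus ?thesis using eta by (rule order_tendstoD)
  qed
  have "\<forall>\<^sub>F n in sequentially. \<forall>b\<in>B. measure M (Ab b n) < \<eta>"
    using ev fin by (simp add: eventually_ball_finite)
  then obtain N where N: "\<forall>b\<in>B. measure M (Ab b N) < \<eta>" unfolding eventually_sequentially by blast
  define A where "A = {\<omega>\<in>space M. \<forall>b\<in>B. norm (X b \<omega>) \<le> real N}"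
  have Aeq: "A = space M - (\<Union>b\<in>B. Ab b N)" unfolding A_def Ab_def by (auto simp: not_less)
  have Um: "(\<Union>b\<in>B. Ab b N) \<in> sets M" using Abm fin by auto
  have Am: "A \<in> sets M" unfolding Aeq using Um by auto
  have "measure M (\<Union>b\<in>B. Ab b N) \<le> (\<Sum>b\<in>B. measure M (Ab b N))"
    by (rule measure_UNION_le[OF fin Abm])
  also have "\<dots> \<le> (\<Sum>b\<in>B. \<eta>)" using N by (intro sum_mono) auto
  also have "\<dots> = real (card B) * \<eta>" by simp
  also have "\<dots> \<le> ep" unfolding \<eta>_def using ep by (simp add: field_simps)
  finally have U: "measure M (\<Union>b\<in>B. Ab b N) \<le> ep" .
  have "measure M A = 1 - measure M (\<Union>b\<in>B. Ab b N)" unfolding Aeq using prob_compl[OF Um] by simp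
  hence "measure M A \<ge> 1 - ep" using U by simp
  thus ?thesis using Am unfolding A_def by (intro exI[of _ "real N"]) auto
qed


theorem proposition4:
  fixes M :: "'a measure"
    and B :: "(real^3) set"
    and S0 :: real
    and D0 :: "real^6"
    and u :: "real^3 \<Rightarrow> real^2"
    and \<epsilon> :: "real^3 \<Rightarrow> 'a \<Rightarrow> real^2"
    and Dhat :: "real \<Rightarrow> 'a \<Rightarrow> real^6"
  assumes "prob_space M"
    and "finite B"
    and "\<forall>b\<in>B. norm b = 1"
    and "S0 > 0"
    and "invertible (\<Sum>b\<in>B. outer_prod (xvec b) (xvec b))"
    and "\<forall>b\<in>B. norm (u b) = 1"
    and "prob_space.indep_vars M (\<lambda>_. borel) \<epsilon> B"
    and "\<forall>b\<in>B. distributed M lborel (\<epsilon> b) (\<lambda>x. std_normal_density (x$1) * std_normal_density (x$2))"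
    and "\<forall>\<sigma>>0. \<forall>\<omega>\<in>space M.
           (\<exists>D. \<forall>D'. NLobj B S0 D0 u \<sigma> (\<lambda>b. \<epsilon> b \<omega>) D \<le> NLobj B S0 D0 u \<sigma> (\<lambda>b. \<epsilon> b \<omega>) D') \<longrightarrow>
           (\<forall>D'. NLobj B S0 D0 u \<sigma> (\<lambda>b. \<epsilon> b \<omega>) (Dhat \<sigma> \<omega>) \<le> NLobj B S0 D0 u \<sigma> (\<lambda>b. \<epsilon> b \<omega>) D')"
  shows "bounded_in_prob_at0 M
           (\<lambda>\<sigma> \<omega>. (1 / \<sigma>^3) *\<^sub>R
              (Dhat \<sigma> \<omega> - D0 - \<sigma> *\<^sub>R D1NL B S0 D0 u (\<lambda>b. \<epsilon> b \<omega>)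
                 - \<sigma>^2 *\<^sub>R D2NL B S0 D0 u (\<lambda>b. \<epsilon> b \<omega>)))"
proof -
  note P = assms(1) and fin = assms(2) and S0pos = assms(4) and Ginv = assms(5) and unorm = assms(6)
    and dist = assms(8) and minA = assms(9)
  show ?thesis unfolding bounded_in_prob_at0_def
  proof (intro allI impI)
    fix ep :: real assume ep: "ep > 0"
    have meas: "\<epsilon> b \<in> borel_measurable M" if "b \<in> B" for b
      using distributed_measurable[of M lborel "\<epsilon> b"] dist that by auto
    have ex: "\<exists>K\<ge>0. {\<omega>\<in>space M. \<forall>b\<in>B. norm (\<epsilon> b \<omega>) \<le> K} \<in> sets M \<and>
        measure M {\<omega>\<in>space M. \<forall>b\<in>B. norm (\<epsilon> b \<omega>) \<le> K} \<ge> 1 - ep"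
      by (rule tight_finite[OF P fin _ ep]) (erule meas)
    obtain K where Kall: "K \<ge> 0 \<and> {\<omega>\<in>space M. \<forall>b\<in>B. norm (\<epsilon> b \<omega>) \<le> K} \<in> sets M \<and>
        measure M {\<omega>\<in>space M. \<forall>b\<in>B. norm (\<epsilon> b \<omega>) \<le> K} \<ge> 1 - ep"
      using ex by (elim exE) (rule that)
    note K = conjunct1[OF Kall] conjunct1[OF conjunct2[OF Kall]] conjunct2[OF conjunct2[OF Kall]]
    define A where "A = {\<omega>\<in>space M. \<forall>b\<in>B. norm (\<epsilon> b \<omega>) \<le> K}"
    interpret core B S0 D0 u A "\<lambda>\<omega> b. \<epsilon> b \<omega>" K Dhat
    proof (unfold_locales)
      show "finite B" by (rule fin)
      show "S0 > 0" by (rule S0pos)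
      show "invertible (\<Sum>b\<in>B. outer_prod (xvec b) (xvec b))" by (rule Ginv)
      show "\<forall>b\<in>B. norm (u b) = 1" by (rule unorm)
      show "K \<ge> 0" by (rule K(1))
      show "\<forall>\<omega>\<in>A. \<forall>b\<in>B. norm (\<epsilon> b \<omega>) \<le> K" unfolding A_def by auto
      show "\<forall>\<sigma>>0. \<forall>\<omega>\<in>A. (\<exists>D. \<forall>D'. NLobj B S0 D0 u \<sigma> (\<lambda>b. \<epsilon> b \<omega>) D \<le> NLobj B S0 D0 u \<sigma> (\<lambda>b. \<epsilon> b \<omega>) D') \<longrightarrow>
           (\<forall>D'. NLobj B S0 D0 u \<sigma> (\<lambda>b. \<epsilon> b \<omega>) (Dhat \<sigma> \<omega>) \<le> NLobj B S0 D0 u \<sigma> (\<lambda>b. \<epsilon> b \<omega>) D')"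
        using minA unfolding A_def by auto
    qed
    obtain C where C: "\<forall>\<^sub>F \<sigma> in at_right 0. \<forall>\<omega>\<in>A. norm (cdl \<sigma> \<omega> - \<sigma> *\<^sub>R cd1 \<omega> - \<sigma>^2 *\<^sub>R cd2 \<omega>) \<le> C * \<sigma>^3"
      using bo_final unfolding bo_def by blast
    have "\<forall>\<^sub>F \<sigma> in at_right 0. \<exists>A'\<in>sets M. measure M A' \<ge> 1 - ep \<and>
        (\<forall>\<omega>\<in>A'. norm ((1 / \<sigma>^3) *\<^sub>R (Dhat \<sigma> \<omega> - D0 - \<sigma> *\<^sub>R D1NL B S0 D0 u (\<lambda>b. \<epsilon> b \<omega>)
                 - \<sigma>^2 *\<^sub>R D2NL B S0 D0 u (\<lambda>b. \<epsilon> b \<omega>))) \<le> C)"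
      using C eventually_at_right_less[of 0]
    proof eventually_elim
      case (elim \<sigma>)
      show ?case
      proof (intro bexI[of _ A] conjI ballI)
        show "A \<in> sets M" using K(2) unfolding A_def .
        show "measure M A \<ge> 1 - ep" using K(3) unfolding A_def .
        fix \<omega> assume w: "\<omega> \<in> A"
        have h: "norm (Dhat \<sigma> \<omega> - D0 - \<sigma> *\<^sub>R D1NL B S0 D0 u (\<lambda>b. \<epsilon> b \<omega>)
                 - \<sigma>^2 *\<^sub>R D2NL B S0 D0 u (\<lambda>b. \<epsilon> b \<omega>)) \<le> C * \<sigma>^3"
          using elim w unfolding cdl_def cd1_def cd2_def by auto
        have "norm ((1 / \<sigma>^3) *\<^sub>R (Dhat \<sigma> \<omega> - D0 - \<sigma> *\<^sub>R D1NL B S0 D0 u (\<lambda>b. \<epsilon> b \<omega>)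
                 - \<sigma>^2 *\<^sub>R D2NL B S0 D0 u (\<lambda>b. \<epsilon> b \<omega>)))
           = norm (Dhat \<sigma> \<omega> - D0 - \<sigma> *\<^sub>R D1NL B S0 D0 u (\<lambda>b. \<epsilon> b \<omega>)
                 - \<sigma>^2 *\<^sub>R D2NL B S0 D0 u (\<lambda>b. \<epsilon> b \<omega>)) / \<sigma>^3"
          using elim by simp
        also have "\<dots> \<le> C" using h elim by (simp add: divide_le_eq)
        finally show "norm ((1 / \<sigma>^3) *\<^sub>R (Dhat \<sigma> \<omega> - D0 - \<sigma> *\<^sub>R D1NL B S0 D0 u (\<lambda>b. \<epsilon> b \<omega>)
                 - \<sigma>^2 *\<^sub>R D2NL B S0 D0 u (\<lambda>b. \<epsilon> b \<omega>))) \<le> C" .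
      qed
    qed
    thus "\<exists>K. \<forall>\<^sub>F \<sigma> in at_right 0. \<exists>A\<in>sets M. 1 - ep \<le> measure M A \<and>
        (\<forall>\<omega>\<in>A. norm ((1 / \<sigma>^3) *\<^sub>R (Dhat \<sigma> \<omega> - D0 - \<sigma> *\<^sub>R D1NL B S0 D0 u (\<lambda>b. \<epsilon> b \<omega>)
                 - \<sigma>^2 *\<^sub>R D2NL B S0 D0 u (\<lambda>b. \<epsilon> b \<omega>))) \<le> K)"
      by blast
  qed
qed

end
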